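(* Let $\phi$ be $\mu$-strongly convex, let $\alpha>0$, $\beta>0$, and let $\lambda\in[0,1]$ with $\lambda\le\frac{1}{2\alpha}$. Then $$\boldsymbol{T}^*:=\sup\{T^\lambda(z):z\notin\operatorname{argmin}\phi\}<\infty.$$
   Context: Let $\phi:\mathbb{R}^n\to\mathbb{R}$ be twice continuously differentiable, $\mu$-strongly convex ($\mu>0$), with $L$-Lipschitz gradient and minimum value $\phi^*$. For $z\in\mathbb{R}^n$, $x_z$ is the unique $C^1([0,\infty))\cap C^2((0,\infty))$ solution of $\ddot x(t)+\frac{\alpha}{t}\dot x(t)+\beta\nabla^2\phi(x(t))\dot x(t)+\nabla\phi(x(t))=0$ ($t>0$), $x(0)=z$, $\dot x(0)=0$. For $\lambda\in[0,1]$: $\varphi_{z,\lambda}(t)=\frac12\frac{d}{dt}\|\dot x_z(t)\|^2+\lambda\frac{\alpha}{t}\|\dot x_z(t)\|^2$ and $T^\lambda(z)=\inf\{t>0:\varphi_{z,\lambda}(t)\le0\}$. *)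

theory Defs
  imports "HOL-Analysis.Analysis"
begin

definition strongly_convex_on :: "real \<Rightarrow> 'a::real_inner set \<Rightarrow> ('a \<Rightarrow> real) \<Rightarrow> bool" where
  "strongly_convex_on \<mu> S f \<longleftrightarrow> convex S \<and>
     (\<forall>x\<in>S. \<forall>y\<in>S. \<forall>t::real. 0 \<le> t \<and> t \<le> 1 \<longrightarrow>
        f ((1 - t) *\<^sub>R x + t *\<^sub>R y) \<le> (1 - t) * f x + t * f y - \<mu> / 2 * t * (1 - t) * (norm (x - y))\<^sup>2)"

text \<open>Solution of  x'' + (alpha/t) x' + beta H(x) x' + g(x) = 0 on t > 0,
  x(0) = z, x'(0) = 0, with x in C^1([0,inf)) and C^2((0,inf)).
  Here g is the gradient and H the Hessian of phi.\<close>
definition is_solution ::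
  "('a::euclidean_space \<Rightarrow> 'a) \<Rightarrow> ('a \<Rightarrow> 'a \<Rightarrow>\<^sub>L 'a) \<Rightarrow> real \<Rightarrow> real \<Rightarrow> 'a \<Rightarrow> (real \<Rightarrow> 'a) \<Rightarrow> bool" where
  "is_solution g H \<alpha> \<beta> z x \<longleftrightarrow>
     (\<exists>v a. (\<forall>t\<ge>0. (x has_vector_derivative v t) (at t within {0..}))
          \<and> continuous_on {0..} v
          \<and> (\<forall>t>0. (v has_vector_derivative a t) (at t))
          \<and> continuous_on {0<..} a
          \<and> (\<forall>t>0. a t + (\<alpha> / t) *\<^sub>R v t + \<beta> *\<^sub>R blinfun_apply (H (x t)) (v t) + g (x t) = 0)
          \<and> x 0 = z \<and> v 0 = 0)"

definition varphi :: "(real \<Rightarrow> 'a::real_normed_vector) \<Rightarrow> real \<Rightarrow> real \<Rightarrow> real \<Rightarrow> real" where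
  "varphi x \<alpha> lam t =
     (1/2) * deriv (\<lambda>s. (norm (vector_derivative x (at s)))\<^sup>2) t
     + lam * (\<alpha> / t) * (norm (vector_derivative x (at t)))\<^sup>2"

text \<open>T^lambda(z) as an extended real; the infimum of the empty set is +infinity.\<close>
definition T_lambda :: "(real \<Rightarrow> 'a::real_normed_vector) \<Rightarrow> real \<Rightarrow> real \<Rightarrow> ereal" where
  "T_lambda x \<alpha> lam = Inf (ereal ` {t. t > 0 \<and> varphi x \<alpha> lam t \<le> 0})"

definition argmin_set :: "('a \<Rightarrow> real) \<Rightarrow> 'a set" where
  "argmin_set f = {x. \<forall>y. f x \<le> f y}"

end

theory Submission
  imports Defs
begin


lemma line_deriv:
  fixes \<phi> :: "'a::euclidean_space \<Rightarrow> real"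
  assumes grad: "\<And>x. (\<phi> has_derivative (\<lambda>h. g x \<bullet> h)) (at x)"
  shows "((\<lambda>t. \<phi> (x + t *\<^sub>R d)) has_real_derivative (g (x + t0 *\<^sub>R d) \<bullet> d)) (at t0)"
proof -
  have l: "((\<lambda>t. x + t *\<^sub>R d) has_derivative (\<lambda>t. t *\<^sub>R d)) (at t0)"
    by (auto intro!: derivative_eq_intros)
  have "((\<lambda>t. \<phi> (x + t *\<^sub>R d)) has_derivative (\<lambda>t. g (x + t0 *\<^sub>R d) \<bullet> (t *\<^sub>R d))) (at t0)"
    using has_derivative_compose[OF l grad] by (simp add: o_def)
  moreover have "(\<lambda>t. g (x + t0 *\<^sub>R d) \<bullet> (t *\<^sub>R d)) = (*) (g (x + t0 *\<^sub>R d) \<bullet> d)"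
    by (auto simp: fun_eq_iff)
  ultimately show ?thesis unfolding has_field_derivative_def by simp
qed

lemma line_vderiv:
  fixes g :: "'a::euclidean_space \<Rightarrow> 'a"
  assumes hess: "\<And>x. (g has_derivative blinfun_apply (H x)) (at x)"
  shows "((\<lambda>t. g (x + t *\<^sub>R d)) has_vector_derivative (blinfun_apply (H (x + t0 *\<^sub>R d)) d)) (at t0)"
proof -
  have l: "((\<lambda>t. x + t *\<^sub>R d) has_derivative (\<lambda>t. t *\<^sub>R d)) (at t0)"
    by (auto intro!: derivative_eq_intros)
  have "((\<lambda>t. g (x + t *\<^sub>R d)) has_derivative (\<lambda>t. blinfun_apply (H (x + t0 *\<^sub>R d)) (t *\<^sub>R d))) (at t0)"
    using has_derivative_compose[OF l hess] by (simp add: o_def)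
  then show ?thesis unfolding has_vector_derivative_def
    by (simp add: blinfun.scaleR_right)
qed

lemma first_order:
  fixes \<phi> :: "'a::euclidean_space \<Rightarrow> real"
  assumes grad: "\<And>x. (\<phi> has_derivative (\<lambda>h. g x \<bullet> h)) (at x)"
    and sconv: "strongly_convex_on \<mu> UNIV \<phi>"
  shows "\<phi> y \<ge> \<phi> x + g x \<bullet> (y - x) + \<mu>/2 * (norm (y - x))\<^sup>2"
proof (rule ccontr)
  assume neg: "\<not> ?thesis"
  define k where "k t = \<phi> (x + t *\<^sub>R (y - x)) - (1-t) * \<phi> x - t * \<phi> y + \<mu>/2 * t * (1-t) * (norm (y-x))\<^sup>2" for t
  have kd: "(k has_real_derivative (g x \<bullet> (y - x) + \<phi> x - \<phi> y + \<mu>/2 * (norm (y-x))\<^sup>2)) (at 0)"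
    unfolding k_def
    using line_deriv[OF grad, of x "y - x" 0]
    by (auto intro!: derivative_eq_intros)
  have le: "k t \<le> 0" if "0 \<le> t" "t \<le> 1" for t
  proof -
    have e: "x + t *\<^sub>R (y - x) = (1 - t) *\<^sub>R x + t *\<^sub>R y" by (simp add: algebra_simps)
    have "norm (x - y) = norm (y - x)" by (simp add: norm_minus_commute)
    moreover have "\<phi> ((1 - t) *\<^sub>R x + t *\<^sub>R y) \<le> (1 - t) * \<phi> x + t * \<phi> y - \<mu> / 2 * t * (1 - t) * (norm (x - y))\<^sup>2"
      using sconv that unfolding strongly_convex_on_def by blast
    ultimately show ?thesis unfolding k_def e by simp
  qed
  have k0: "k 0 = 0" by (simp add: k_def)
  obtain d where d: "d > 0" "\<And>h. h > 0 \<Longrightarrow> h < d \<Longrightarrow> k 0 < k (0 + h)"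
    using DERIV_pos_inc_right[OF kd] neg by force
  have "k 0 < k (min (d/2) 1)" using d by simp
  moreover have "k (min (d/2) 1) \<le> 0" using le d by simp
  ultimately show False using k0 by simp
qed

lemma monotone_grad:
  fixes \<phi> :: "'a::euclidean_space \<Rightarrow> real"
  assumes grad: "\<And>x. (\<phi> has_derivative (\<lambda>h. g x \<bullet> h)) (at x)"
    and sconv: "strongly_convex_on \<mu> UNIV \<phi>"
  shows "(g y - g x) \<bullet> (y - x) \<ge> \<mu> * (norm (y - x))\<^sup>2"
proof -
  have 1: "\<phi> y \<ge> \<phi> x + g x \<bullet> (y - x) + \<mu>/2 * (norm (y - x))\<^sup>2" by (rule first_order[OF grad sconv])
  have 2: "\<phi> x \<ge> \<phi> y + g y \<bullet> (x - y) + \<mu>/2 * (norm (x - y))\<^sup>2" by (rule first_order[OF grad sconv])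
  have "norm (x - y) = norm (y - x)" by (simp add: norm_minus_commute)
  moreover have "g y \<bullet> (x - y) = - (g y \<bullet> (y - x))" by (simp add: inner_diff_right)
  ultimately show ?thesis using 1 2 by (simp add: inner_diff_left)
qed

lemma line_inner_deriv:
  fixes g :: "'a::euclidean_space \<Rightarrow> 'a"
  assumes hess: "\<And>x. (g has_derivative blinfun_apply (H x)) (at x)"
  shows "((\<lambda>t. (g (x + t *\<^sub>R d) - g x) \<bullet> u) has_real_derivative (blinfun_apply (H x) d \<bullet> u)) (at 0)"
proof -
  have "((\<lambda>t. g (x + t *\<^sub>R d)) has_vector_derivative (blinfun_apply (H (x + 0 *\<^sub>R d)) d)) (at 0)"
    by (rule line_vderiv[OF hess])
  then have "((\<lambda>t. g (x + t *\<^sub>R d) - g x) has_vector_derivative (blinfun_apply (H x) d)) (at 0)"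
    by (auto intro!: derivative_eq_intros)
  then have "((\<lambda>t. (g (x + t *\<^sub>R d) - g x) \<bullet> u) has_derivative (\<lambda>t. (t *\<^sub>R blinfun_apply (H x) d) \<bullet> u)) (at 0)"
    unfolding has_vector_derivative_def by (rule bounded_linear.has_derivative[OF bounded_linear_inner_left])
  moreover have "(\<lambda>t. (t *\<^sub>R blinfun_apply (H x) d) \<bullet> u) = (*) (blinfun_apply (H x) d \<bullet> u)"
    by (auto simp: fun_eq_iff)
  ultimately show ?thesis unfolding has_field_derivative_def by simp
qed

lemma hess_psd:
  fixes \<phi> :: "'a::euclidean_space \<Rightarrow> real"
  assumes grad: "\<And>x. (\<phi> has_derivative (\<lambda>h. g x \<bullet> h)) (at x)"
    and hess: "\<And>x. (g has_derivative blinfun_apply (H x)) (at x)"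
    and sconv: "strongly_convex_on \<mu> UNIV \<phi>"
  shows "h \<bullet> blinfun_apply (H x) h \<ge> \<mu> * (norm h)\<^sup>2"
proof (rule ccontr)
  assume neg: "\<not> ?thesis"
  define k where "k t = (g (x + t *\<^sub>R h) - g x) \<bullet> h - \<mu> * t * (norm h)\<^sup>2" for t
  have kd: "(k has_real_derivative (blinfun_apply (H x) h \<bullet> h - \<mu> * (norm h)\<^sup>2)) (at 0)"
    unfolding k_def using line_inner_deriv[OF hess, of x h h]
    by (auto intro!: derivative_eq_intros)
  have ge: "k t \<ge> 0" if "t > 0" for t
  proof -
    have "(g (x + t *\<^sub>R h) - g x) \<bullet> ((x + t *\<^sub>R h) - x) \<ge> \<mu> * (norm ((x + t *\<^sub>R h) - x))\<^sup>2"
      by (rule monotone_grad[OF grad sconv])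
    then have "t * ((g (x + t *\<^sub>R h) - g x) \<bullet> h) \<ge> t * (\<mu> * t * (norm h)\<^sup>2)"
      using that by (simp add: power2_eq_square algebra_simps)
    then show ?thesis using that unfolding k_def by simp
  qed
  have k0: "k 0 = 0" by (simp add: k_def)
  obtain d where d: "d > 0" "\<And>h. h > 0 \<Longrightarrow> h < d \<Longrightarrow> k 0 > k (0 + h)"
    using DERIV_neg_dec_right[OF kd] neg by (force simp: inner_commute)
  have "k 0 > k (d/2)" using d by simp
  moreover have "k (d/2) \<ge> 0" using ge d by simp
  ultimately show False using k0 by simp
qed

lemma hess_bound:
  fixes g :: "'a::euclidean_space \<Rightarrow> 'a"
  assumes hess: "\<And>x. (g has_derivative blinfun_apply (H x)) (at x)"
    and lip: "L-lipschitz_on UNIV g"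
  shows "norm (blinfun_apply (H x) h) \<le> L * norm h"
proof -
  define u where "u = blinfun_apply (H x) h"
  have L0: "L \<ge> 0" using lipschitz_on_nonneg[OF lip] .
  have "(norm u)\<^sup>2 \<le> L * norm h * norm u"
  proof (rule ccontr)
    assume neg: "\<not> ?thesis"
    define k where "k t = (g (x + t *\<^sub>R h) - g x) \<bullet> u - L * t * norm h * norm u" for t
    have kd: "(k has_real_derivative (u \<bullet> u - L * norm h * norm u)) (at 0)"
      unfolding k_def using line_inner_deriv[OF hess, of x h u]
      by (auto intro!: derivative_eq_intros simp: u_def)
    have le: "k t \<le> 0" if "t > 0" for t
    proof -
      have "(g (x + t *\<^sub>R h) - g x) \<bullet> u \<le> norm (g (x + t *\<^sub>R h) - g x) * norm u"
        by (rule norm_cauchy_schwarz)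
      also have "norm (g (x + t *\<^sub>R h) - g x) \<le> L * (t * norm h)"
        using lipschitz_onD[OF lip, of "x + t *\<^sub>R h" x] that by (simp add: dist_norm)
      then have "norm (g (x + t *\<^sub>R h) - g x) * norm u \<le> L * (t * norm h) * norm u"
        by (simp add: mult_right_mono)
      finally show ?thesis unfolding k_def by (simp add: algebra_simps)
    qed
    have k0: "k 0 = 0" by (simp add: k_def)
    obtain d where d: "d > 0" "\<And>h. h > 0 \<Longrightarrow> h < d \<Longrightarrow> k 0 < k (0 + h)"
      using DERIV_pos_inc_right[OF kd] neg by (force simp: power2_norm_eq_inner)
    have "k 0 < k (d/2)" using d by simp
    moreover have "k (d/2) \<le> 0" using le d by simp
    ultimately show False using k0 by simp
  qed
  then have "norm u * norm u \<le> (L * norm h) * norm u" by (simp add: power2_eq_square algebra_simps)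
  then have "norm u \<le> L * norm h"
  proof (cases "norm u = 0")
    case True then show ?thesis using L0 by simp
  next
    case False then have "norm u > 0" by simp
    with \<open>norm u * norm u \<le> (L * norm h) * norm u\<close> show ?thesis
      by (meson mult_le_cancel_right_pos)
  qed
  then show ?thesis by (simp add: u_def)
qed

lemma grad_nonzero:
  fixes \<phi> :: "'a::euclidean_space \<Rightarrow> real"
  assumes grad: "\<And>x. (\<phi> has_derivative (\<lambda>h. g x \<bullet> h)) (at x)"
    and sconv: "strongly_convex_on \<mu> UNIV \<phi>" and mu: "\<mu> > 0"
    and z: "z \<notin> argmin_set \<phi>"
  shows "g z \<noteq> 0"
proof
  assume g0: "g z = 0"
  have "\<phi> z \<le> \<phi> y" for y
  proof -
    have "\<phi> y \<ge> \<phi> z + g z \<bullet> (y - z) + \<mu>/2 * (norm (y - z))\<^sup>2" by (rule first_order[OF grad sconv])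
    moreover have "\<mu>/2 * (norm (y - z))\<^sup>2 \<ge> 0" using mu by simp
    ultimately show ?thesis using g0 by simp
  qed
  then show False using z unfolding argmin_set_def by blast
qed



lemma decr_lemma:
  fixes f f' :: "real \<Rightarrow> real"
  assumes "s \<le> t" "continuous_on {s..t} f"
    and "\<And>u. s < u \<Longrightarrow> u < t \<Longrightarrow> (f has_real_derivative f' u) (at u)"
    and "\<And>u. s < u \<Longrightarrow> u < t \<Longrightarrow> f' u \<le> 0"
  shows "f t \<le> f s"
  using DERIV_nonpos_imp_decreasing_open[of s t f] assms by blast

definition K2c :: "real \<Rightarrow> real \<Rightarrow> real \<Rightarrow> real" where
  "K2c \<mu> L \<beta> = \<beta> * L * (\<beta> * L / sqrt \<mu> + 1 + L / sqrt \<mu>) + L / sqrt \<mu>"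
definition s0c :: "real \<Rightarrow> real \<Rightarrow> real \<Rightarrow> real \<Rightarrow> real" where
  "s0c \<mu> L \<alpha> \<beta> = min 1 (1 / (2 * (\<alpha> + 1) * (K2c \<mu> L \<beta> + 1)))"
definition Lc :: "real \<Rightarrow> real \<Rightarrow> real \<Rightarrow> real \<Rightarrow> real" where
  "Lc \<mu> L \<alpha> \<beta> = 2 * (1 + \<alpha>)\<^sup>2 / (\<beta> * \<mu>\<^sup>2 * (s0c \<mu> L \<alpha> \<beta>) ^ 3)"
definition Bc :: "real \<Rightarrow> real \<Rightarrow> real \<Rightarrow> real \<Rightarrow> real" where
  "Bc \<mu> L \<alpha> \<beta> = s0c \<mu> L \<alpha> \<beta> * exp (Lc \<mu> L \<alpha> \<beta> + 1)"

locale sol_setting =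
  fixes \<phi> :: "'a::euclidean_space \<Rightarrow> real"
    and g :: "'a \<Rightarrow> 'a"
    and H :: "'a \<Rightarrow> 'a \<Rightarrow>\<^sub>L 'a"
    and \<mu> L \<alpha> \<beta> lam :: real
    and x v a :: "real \<Rightarrow> 'a" and z :: 'a
  assumes grad: "\<And>x. (\<phi> has_derivative (\<lambda>h. g x \<bullet> h)) (at x)"
    and hess: "\<And>x. (g has_derivative blinfun_apply (H x)) (at x)"
    and mu_pos: "\<mu> > 0"
    and sconv: "strongly_convex_on \<mu> UNIV \<phi>"
    and lip: "L-lipschitz_on UNIV g"
    and alpha_pos: "\<alpha> > 0" and beta_pos: "\<beta> > 0"
    and lam: "0 \<le> lam" "lam \<le> 1" "lam \<le> 1 / (2 * \<alpha>)"
    and xd0: "\<And>t. t \<ge> 0 \<Longrightarrow> (x has_vector_derivative v t) (at t within {0..})"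
    and vc: "continuous_on {0..} v"
    and vd: "\<And>t. t > 0 \<Longrightarrow> (v has_vector_derivative a t) (at t)"
    and ode: "\<And>t. t > 0 \<Longrightarrow> a t + (\<alpha> / t) *\<^sub>R v t + \<beta> *\<^sub>R blinfun_apply (H (x t)) (v t) + g (x t) = 0"
    and x0: "x 0 = z" and v0: "v 0 = 0"
    and gz: "g z \<noteq> 0"
begin

definition G where "G = norm (g z)"
definition V where "V = G / sqrt \<mu>"

lemma G_pos: "G > 0" using gz by (simp add: G_def)
lemma L_nonneg: "L \<ge> 0" using lipschitz_on_nonneg[OF lip] .

lemma xd: "t > 0 \<Longrightarrow> (x has_vector_derivative v t) (at t)"
proof -
  assume t: "t > 0"
  have "t \<in> interior {0..}" using t by simp
  then have "at t within {0..} = at t" by (rule at_within_interior)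
  then show ?thesis using xd0[of t] t by simp
qed

lemma xc: "continuous_on {0..} x"
  unfolding continuous_on_eq_continuous_within
proof
  fix t :: real assume "t \<in> {0..}"
  then show "continuous (at t within {0..}) x"
    using xd0[of t] by (intro has_vector_derivative_continuous) auto
qed

lemma phic: "continuous_on UNIV \<phi>"
  by (rule has_derivative_continuous_on[of UNIV _ "\<lambda>x h. g x \<bullet> h"]) (simp add: grad)

lemma gc: "continuous_on UNIV g"
  by (rule has_derivative_continuous_on[of UNIV _ "\<lambda>x. blinfun_apply (H x)"]) (simp add: hess)

lemma a_eq: "t > 0 \<Longrightarrow> a t = - ((\<alpha> / t) *\<^sub>R v t + \<beta> *\<^sub>R blinfun_apply (H (x t)) (v t) + g (x t))"
  using ode[of t] by (simp add: algebra_simps eq_neg_iff_add_eq_0)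

definition E where "E t = \<phi> (x t) + (v t \<bullet> v t) / 2" for t

lemma Ec: "continuous_on {0..} E"
  unfolding E_def
  by (intro continuous_intros continuous_on_compose2[OF phic xc] vc) auto

lemma Ed: "t > 0 \<Longrightarrow> (E has_real_derivative (g (x t) \<bullet> v t + v t \<bullet> a t)) (at t)"
proof -
  assume t: "t > 0"
  have c: "((\<lambda>s. \<phi> (x s)) has_real_derivative (g (x t) \<bullet> v t)) (at t)"
  proof -
    have "((\<lambda>s. \<phi> (x s)) has_derivative (\<lambda>h. g (x t) \<bullet> (h *\<^sub>R v t))) (at t)"
      using has_derivative_compose[OF xd[OF t, unfolded has_vector_derivative_def] grad]
      by (simp add: o_def)
    moreover have "(\<lambda>h. g (x t) \<bullet> (h *\<^sub>R v t)) = (*) (g (x t) \<bullet> v t)" by (auto simp: fun_eq_iff)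
    ultimately show ?thesis unfolding has_field_derivative_def by simp
  qed
  have d: "((\<lambda>s. v s \<bullet> v s) has_real_derivative (2 * (v t \<bullet> a t))) (at t)"
  proof -
    have vd': "(v has_derivative (\<lambda>h. h *\<^sub>R a t)) (at t)"
      using vd[OF t] by (simp add: has_vector_derivative_def)
    have "((\<lambda>s. v s \<bullet> v s) has_derivative (\<lambda>h. v t \<bullet> (h *\<^sub>R a t) + (h *\<^sub>R a t) \<bullet> v t)) (at t)"
      by (rule has_derivative_inner[OF vd' vd'])
    moreover have "(\<lambda>h. v t \<bullet> (h *\<^sub>R a t) + (h *\<^sub>R a t) \<bullet> v t) = (*) (2 * (v t \<bullet> a t))"
      by (auto simp: fun_eq_iff inner_commute algebra_simps)
    ultimately show ?thesis unfolding has_field_derivative_def by simp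
  qed
  show ?thesis unfolding E_def using c d
    by (auto intro!: derivative_eq_intros)
qed

lemma Ed_le: "t > 0 \<Longrightarrow> g (x t) \<bullet> v t + v t \<bullet> a t \<le> - \<beta> * \<mu> * (v t \<bullet> v t)"
proof -
  assume t: "t > 0"
  have e: "v t \<bullet> a t = - ((\<alpha> / t) * (v t \<bullet> v t)) - \<beta> * (v t \<bullet> blinfun_apply (H (x t)) (v t)) - v t \<bullet> g (x t)"
    unfolding a_eq[OF t] by (simp add: inner_add_right inner_minus_right inner_diff_right)
  have c: "g (x t) \<bullet> v t = v t \<bullet> g (x t)" by (rule inner_commute)
  have p: "(\<alpha> / t) * (v t \<bullet> v t) \<ge> 0" using t alpha_pos by simp
  have "v t \<bullet> blinfun_apply (H (x t)) (v t) \<ge> \<mu> * (v t \<bullet> v t)"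
    using hess_psd[OF grad hess sconv, of "v t" "x t"] by (simp add: power2_norm_eq_inner)
  then have q: "\<beta> * (v t \<bullet> blinfun_apply (H (x t)) (v t)) \<ge> \<beta> * (\<mu> * (v t \<bullet> v t))"
    using beta_pos by (intro mult_left_mono) auto
  show ?thesis using e c p q by (simp add: mult.assoc)
qed

lemma E_decr: "0 \<le> s \<Longrightarrow> s \<le> t \<Longrightarrow> E t \<le> E s"
proof -
  assume st: "0 \<le> s" "s \<le> t"
  show ?thesis
  proof (rule decr_lemma[OF st(2)])
    show "continuous_on {s..t} E" using Ec by (rule continuous_on_subset) (use st in auto)
    fix u assume u: "s < u" "u < t"
    show "(E has_real_derivative (g (x u) \<bullet> v u + v u \<bullet> a u)) (at u)" using Ed u st by simp
    have "\<beta> * \<mu> * (v u \<bullet> v u) \<ge> 0" using beta_pos mu_pos by simp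
    then show "g (x u) \<bullet> v u + v u \<bullet> a u \<le> 0" using Ed_le[of u] u st by simp
  qed
qed

lemma phi_lower: "\<phi> y \<ge> \<phi> z - G\<^sup>2 / (2 * \<mu>)"
proof -
  have 1: "\<phi> y \<ge> \<phi> z + g z \<bullet> (y - z) + \<mu>/2 * (norm (y - z))\<^sup>2" by (rule first_order[OF grad sconv])
  have 2: "g z \<bullet> (y - z) \<ge> - (G * norm (y - z))"
    using norm_cauchy_schwarz[of "- g z" "y - z"] by (simp add: G_def)
  define r where "r = norm (y - z)"
  have "(\<mu> * r - G)\<^sup>2 / (2 * \<mu>) \<ge> 0" using mu_pos by simp
  then have "\<mu>/2 * r\<^sup>2 - G * r + G\<^sup>2 / (2 * \<mu>) \<ge> 0"
    using mu_pos by (simp add: power2_eq_square field_simps)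
  then show ?thesis using 1 2 unfolding r_def by linarith
qed

lemma v_bound: "t \<ge> 0 \<Longrightarrow> norm (v t) \<le> V"
proof -
  assume t: "t \<ge> 0"
  have "E t \<le> E 0" using E_decr[of 0 t] t by simp
  then have "\<phi> (x t) + (v t \<bullet> v t) / 2 \<le> \<phi> z" by (simp add: E_def x0 v0)
  then have "v t \<bullet> v t \<le> 2 * (\<phi> z - \<phi> (x t))" by simp
  also have "\<dots> \<le> G\<^sup>2 / \<mu>" using phi_lower[of "x t"] mu_pos by simp
  finally have "(norm (v t))\<^sup>2 \<le> G\<^sup>2 / \<mu>" by (simp add: power2_norm_eq_inner)
  also have "G\<^sup>2 / \<mu> = V\<^sup>2" using mu_pos by (simp add: V_def power_divide)
  finally show ?thesis using power2_le_imp_le G_pos mu_pos V_def by fastforce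
qed

lemma x_bound: "t \<ge> 0 \<Longrightarrow> norm (x t - z) \<le> t * V"
proof -
  assume t: "t \<ge> 0"
  show ?thesis
  proof (cases "t = 0")
    case True then show ?thesis by (simp add: x0)
  next
    case False
    then have t': "0 < t" using t by simp
    have "norm (x t - x 0) \<le> t * V - 0 * V"
    proof (rule differentiable_bound_general[OF t', of x "\<lambda>s. s * V" v "\<lambda>_. V"])
      show "continuous_on {0..t} x" using xc by (rule continuous_on_subset) auto
      show "continuous_on {0..t} (\<lambda>s. s * V)" by (intro continuous_intros)
      fix s assume s: "0 < s" "s < t"
      show "(x has_vector_derivative v s) (at s)" using xd s by simp
      show "((\<lambda>s. s * V) has_vector_derivative V) (at s)"
        by (auto intro!: derivative_eq_intros simp: has_real_derivative_iff_has_vector_derivative[symmetric])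
      show "norm (v s) \<le> V" using v_bound s by simp
    qed
    then show ?thesis by (simp add: x0)
  qed
qed


definition K1 where "K1 = \<beta> * L / sqrt \<mu> + 1 + L / sqrt \<mu>"
definition K2 where "K2 = \<beta> * L * K1 + L / sqrt \<mu>"
definition w where "w s = \<beta> *\<^sub>R blinfun_apply (H (x s)) (v s) + g (x s)" for s

lemma K1_nonneg: "K1 \<ge> 0" using L_nonneg beta_pos mu_pos by (simp add: K1_def)
lemma K2_nonneg: "K2 \<ge> 0" using L_nonneg beta_pos mu_pos K1_nonneg by (simp add: K2_def)
lemma V_eq: "V = G * (1 / sqrt \<mu>)" by (simp add: V_def)
lemma V_nonneg: "V \<ge> 0" using G_pos mu_pos by (simp add: V_def)

lemma Hb: "norm (blinfun_apply (H y) h) \<le> L * norm h"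
  by (rule hess_bound[OF hess lip])

lemma g_near: "t \<ge> 0 \<Longrightarrow> norm (g (x t) - g z) \<le> L * (t * V)"
proof -
  assume t: "t \<ge> 0"
  have "norm (g (x t) - g z) \<le> L * norm (x t - z)"
    using lipschitz_onD[OF lip, of "x t" z] by (simp add: dist_norm)
  also have "\<dots> \<le> L * (t * V)" using x_bound[OF t] L_nonneg by (rule mult_left_mono)
  finally show ?thesis .
qed

lemma w_bound: "0 \<le> s \<Longrightarrow> s \<le> 1 \<Longrightarrow> norm (w s) \<le> G * K1"
proof -
  assume s: "0 \<le> s" "s \<le> 1"
  have "norm (w s) \<le> norm (\<beta> *\<^sub>R blinfun_apply (H (x s)) (v s)) + norm (g (x s))"
    unfolding w_def by (rule norm_triangle_ineq)
  also have "norm (\<beta> *\<^sub>R blinfun_apply (H (x s)) (v s)) \<le> \<beta> * (L * V)"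
  proof -
    have "norm (blinfun_apply (H (x s)) (v s)) \<le> L * norm (v s)" by (rule Hb)
    also have "\<dots> \<le> L * V" using v_bound[OF s(1)] L_nonneg by (rule mult_left_mono)
    finally show ?thesis using beta_pos by (simp add: mult_left_mono)
  qed
  also have "norm (g (x s)) \<le> G + L * V"
  proof -
    have "norm (g (x s)) \<le> norm (g z) + norm (g (x s) - g z)" by (rule norm_triangle_sub)
    also have "norm (g (x s) - g z) \<le> L * (s * V)" by (rule g_near[OF s(1)])
    also have "L * (s * V) \<le> L * V"
      using s L_nonneg V_nonneg by (simp add: mult_left_le_one_le mult_left_mono)
    finally show ?thesis by (simp add: G_def)
  qed
  finally show ?thesis unfolding K1_def V_eq by (simp add: algebra_simps)
qed

lemma powr_cont: "continuous_on S (\<lambda>s::real. s powr p) " if "S \<subseteq> {0..}" "p > 0"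
  by (rule continuous_on_powr') (use that in \<open>auto intro: continuous_intros\<close>)

lemma f_deriv: "s > 0 \<Longrightarrow> ((\<lambda>s. s powr \<alpha> *\<^sub>R v s) has_vector_derivative (- (s powr \<alpha>) *\<^sub>R w s)) (at s)"
proof -
  assume s: "s > 0"
  have "((\<lambda>s. s powr \<alpha> *\<^sub>R v s) has_vector_derivative (s powr \<alpha> *\<^sub>R a s + (\<alpha> * s powr (\<alpha> - 1)) *\<^sub>R v s)) (at s)"
    by (rule has_vector_derivative_scaleR[OF has_real_derivative_powr[OF s] vd[OF s]])
  moreover have "s powr \<alpha> *\<^sub>R a s + (\<alpha> * s powr (\<alpha> - 1)) *\<^sub>R v s = - (s powr \<alpha>) *\<^sub>R w s"
  proof -
    have "s powr (\<alpha> - 1) = s powr \<alpha> / s" using s by (simp add: powr_diff powr_one)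
    then show ?thesis unfolding a_eq[OF s] w_def using s by (simp add: algebra_simps)
  qed
  ultimately show ?thesis by simp
qed

lemma v_small: "0 \<le> t \<Longrightarrow> t \<le> 1 \<Longrightarrow> norm (v t) \<le> t * (G * K1)"
proof -
  assume t: "0 \<le> t" "t \<le> 1"
  show ?thesis
  proof (cases "t = 0")
    case True then show ?thesis by (simp add: v0)
  next
    case False
    then have t': "0 < t" using t by simp
    define C where "C = t powr \<alpha> * (G * K1)"
    have "norm ((\<lambda>s. s powr \<alpha> *\<^sub>R v s) t - (\<lambda>s. s powr \<alpha> *\<^sub>R v s) 0) \<le> t * C - 0 * C"
    proof (rule differentiable_bound_general[OF t', of _ "\<lambda>s. s * C" "\<lambda>s. - (s powr \<alpha>) *\<^sub>R w s" "\<lambda>_. C"])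
      show "continuous_on {0..t} (\<lambda>s. s powr \<alpha> *\<^sub>R v s)"
        by (intro continuous_intros powr_cont continuous_on_subset[OF vc]) (use alpha_pos in auto)
      show "continuous_on {0..t} (\<lambda>s. s * C)" by (intro continuous_intros)
      fix s assume s: "0 < s" "s < t"
      show "((\<lambda>s. s powr \<alpha> *\<^sub>R v s) has_vector_derivative - (s powr \<alpha>) *\<^sub>R w s) (at s)"
        using f_deriv s by simp
      show "((\<lambda>s. s * C) has_vector_derivative C) (at s)"
        by (auto intro!: derivative_eq_intros simp: has_real_derivative_iff_has_vector_derivative[symmetric])
      have "norm (- (s powr \<alpha>) *\<^sub>R w s) = s powr \<alpha> * norm (w s)" by simp
      also have "\<dots> \<le> t powr \<alpha> * (G * K1)"
        using w_bound[of s] s t powr_mono2[of \<alpha> s t] alpha_pos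
        by (intro mult_mono) auto
      finally show "norm (- (s powr \<alpha>) *\<^sub>R w s) \<le> C" by (simp add: C_def)
    qed
    then have "t powr \<alpha> * norm (v t) \<le> t powr \<alpha> * (t * (G * K1))"
      using alpha_pos by (simp add: v0 C_def algebra_simps)
    then show ?thesis using t' by simp
  qed
qed

lemma w_near: "0 \<le> s \<Longrightarrow> s \<le> 1 \<Longrightarrow> norm (w s - g z) \<le> s * (G * K2)"
proof -
  assume s: "0 \<le> s" "s \<le> 1"
  have "norm (w s - g z) \<le> norm (\<beta> *\<^sub>R blinfun_apply (H (x s)) (v s)) + norm (g (x s) - g z)"
    unfolding w_def by (metis add_diff_eq norm_triangle_ineq)
  also have "norm (\<beta> *\<^sub>R blinfun_apply (H (x s)) (v s)) \<le> \<beta> * (L * (s * (G * K1)))"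
  proof -
    have "norm (blinfun_apply (H (x s)) (v s)) \<le> L * norm (v s)" by (rule Hb)
    also have "\<dots> \<le> L * (s * (G * K1))" using v_small[OF s] L_nonneg by (rule mult_left_mono)
    finally show ?thesis using beta_pos by (simp add: mult_left_mono)
  qed
  also have "norm (g (x s) - g z) \<le> L * (s * V)" by (rule g_near[OF s(1)])
  finally show ?thesis unfolding K2_def V_eq by (simp add: algebra_simps)
qed

lemma f2_deriv: "s > 0 \<Longrightarrow> ((\<lambda>s. s powr \<alpha> *\<^sub>R v s + (s powr (\<alpha> + 1) / (\<alpha> + 1)) *\<^sub>R g z) has_vector_derivative (- (s powr \<alpha>) *\<^sub>R (w s - g z))) (at s)"
proof -
  assume s: "s > 0"
  have d: "((\<lambda>s. s powr (\<alpha> + 1) / (\<alpha> + 1)) has_real_derivative s powr \<alpha>) (at s)"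
    using has_real_derivative_powr[OF s, of "\<alpha> + 1"] alpha_pos s
    by (auto intro!: derivative_eq_intros)
  have "((\<lambda>s. s powr \<alpha> *\<^sub>R v s + (s powr (\<alpha> + 1) / (\<alpha> + 1)) *\<^sub>R g z) has_vector_derivative
      (- (s powr \<alpha>) *\<^sub>R w s + s powr \<alpha> *\<^sub>R g z)) (at s)"
    using has_vector_derivative_add[OF f_deriv[OF s] has_vector_derivative_scaleR[OF d has_vector_derivative_const[of "g z"]]]
    by simp
  then show ?thesis by (simp add: algebra_simps)
qed

lemma v_lower: "0 < t \<Longrightarrow> t \<le> 1 \<Longrightarrow> norm (v t + (t / (\<alpha> + 1)) *\<^sub>R g z) \<le> t\<^sup>2 * (G * K2)"
proof -
  assume t: "0 < t" "t \<le> 1"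
  define C where "C = t powr \<alpha> * (t * (G * K2))"
  define f2 where "f2 s = s powr \<alpha> *\<^sub>R v s + (s powr (\<alpha> + 1) / (\<alpha> + 1)) *\<^sub>R g z" for s
  have "norm (f2 t - f2 0) \<le> t * C - 0 * C"
  proof (rule differentiable_bound_general[OF t(1), of _ "\<lambda>s. s * C" "\<lambda>s. - (s powr \<alpha>) *\<^sub>R (w s - g z)" "\<lambda>_. C"])
    show "continuous_on {0..t} f2" unfolding f2_def
      by (intro continuous_intros powr_cont continuous_on_subset[OF vc]) (use alpha_pos in auto)
    show "continuous_on {0..t} (\<lambda>s. s * C)" by (intro continuous_intros)
    fix s assume s: "0 < s" "s < t"
    show "(f2 has_vector_derivative - (s powr \<alpha>) *\<^sub>R (w s - g z)) (at s)"
      unfolding f2_def using f2_deriv s by simp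
    show "((\<lambda>s. s * C) has_vector_derivative C) (at s)"
      by (auto intro!: derivative_eq_intros simp: has_real_derivative_iff_has_vector_derivative[symmetric])
    have "norm (- (s powr \<alpha>) *\<^sub>R (w s - g z)) = s powr \<alpha> * norm (w s - g z)" by simp
    also have "\<dots> \<le> t powr \<alpha> * (t * (G * K2))"
    proof (rule mult_mono)
      show "s powr \<alpha> \<le> t powr \<alpha>" using powr_mono2[of \<alpha> s t] s alpha_pos by simp
      have "norm (w s - g z) \<le> s * (G * K2)" using w_near[of s] s t by simp
      also have "\<dots> \<le> t * (G * K2)" using s G_pos K2_nonneg by (intro mult_right_mono) auto
      finally show "norm (w s - g z) \<le> t * (G * K2)" .
    qed auto
    finally show "norm (- (s powr \<alpha>) *\<^sub>R (w s - g z)) \<le> C" by (simp add: C_def)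
  qed
  moreover have f20: "f2 0 = 0" using alpha_pos by (simp add: f2_def v0)
  moreover have f2t: "f2 t = t powr \<alpha> *\<^sub>R (v t + (t / (\<alpha> + 1)) *\<^sub>R g z)"
    using t by (simp add: f2_def powr_add powr_one algebra_simps)
  ultimately have "norm (f2 t) \<le> t * C" by simp
  then have "norm (t powr \<alpha> *\<^sub>R (v t + (t / (\<alpha> + 1)) *\<^sub>R g z)) \<le> t * C" by (simp only: f2t)
  then have "t powr \<alpha> * norm (v t + (t / (\<alpha> + 1)) *\<^sub>R g z) \<le> t powr \<alpha> * (t\<^sup>2 * (G * K2))"
    by (simp only: norm_scaleR abs_of_nonneg[OF powr_ge_zero]) (simp add: C_def power2_eq_square algebra_simps)
  then show ?thesis using t by simp
qed


lemma K2_eq: "K2 = K2c \<mu> L \<beta>" by (simp add: K2_def K1_def K2c_def)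

abbreviation s0 where "s0 \<equiv> s0c \<mu> L \<alpha> \<beta>"

lemma s0_pos: "s0 > 0" "s0 \<le> 1"
  using alpha_pos K2_nonneg unfolding s0c_def K2_eq[symmetric] by auto

lemma v_s0: "norm (v s0) \<ge> s0 * G / (2 * (\<alpha> + 1))"
proof -
  have n: "norm ((s0 / (\<alpha> + 1)) *\<^sub>R g z) = s0 * G / (\<alpha> + 1)"
    using s0_pos alpha_pos by (simp add: G_def)
  have "s0 * G / (\<alpha> + 1) \<le> norm (v s0) + norm (v s0 + (s0 / (\<alpha> + 1)) *\<^sub>R g z)"
    using norm_triangle_ineq4[of "v s0 + (s0 / (\<alpha> + 1)) *\<^sub>R g z" "v s0"] n
    by (simp add: norm_minus_commute)
  also have "norm (v s0 + (s0 / (\<alpha> + 1)) *\<^sub>R g z) \<le> s0\<^sup>2 * (G * K2)"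
    using v_lower s0_pos by simp
  finally have 1: "s0 * G / (\<alpha> + 1) - s0\<^sup>2 * (G * K2) \<le> norm (v s0)" by simp
  have "s0 * (K2 + 1) \<le> 1 / (2 * (\<alpha> + 1))"
  proof -
    have "s0 \<le> 1 / (2 * (\<alpha> + 1) * (K2 + 1))" unfolding s0c_def K2_eq[symmetric] by simp
    then have "s0 * (K2 + 1) \<le> 1 / (2 * (\<alpha> + 1) * (K2 + 1)) * (K2 + 1)"
      using K2_nonneg by (intro mult_right_mono) auto
    also have "\<dots> = 1 / (2 * (\<alpha> + 1))"
    proof -
      have ne: "K2 + 1 \<noteq> 0" using K2_nonneg by simp
      show ?thesis using ne by simp
    qed
    finally show ?thesis .
  qed
  then have "s0 * K2 \<le> 1 / (2 * (\<alpha> + 1))" using s0_pos by (simp add: algebra_simps)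
  then have "(s0 * G) * (s0 * K2) \<le> (s0 * G) * (1 / (2 * (\<alpha> + 1)))"
    using s0_pos G_pos by (intro mult_left_mono) auto
  then have "s0\<^sup>2 * (G * K2) \<le> s0 * G / (2 * (\<alpha> + 1))"
    by (simp add: power2_eq_square algebra_simps)
  moreover have "s0 * G / (\<alpha> + 1) = 2 * (s0 * G / (2 * (\<alpha> + 1)))" using alpha_pos by (simp add: field_simps)
  moreover have aux: "\<And>A q X n :: real. A \<le> q \<Longrightarrow> X = 2 * q \<Longrightarrow> X - A \<le> n \<Longrightarrow> q \<le> n" by linarith
  ultimately show ?thesis using 1 by blast
qed

lemma vv_deriv: "t > 0 \<Longrightarrow> ((\<lambda>s. v s \<bullet> v s) has_real_derivative (2 * (v t \<bullet> a t))) (at t)"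
proof -
  assume t: "t > 0"
  have vd': "(v has_derivative (\<lambda>h. h *\<^sub>R a t)) (at t)"
    using vd[OF t] by (simp add: has_vector_derivative_def)
  have "((\<lambda>s. v s \<bullet> v s) has_derivative (\<lambda>h. v t \<bullet> (h *\<^sub>R a t) + (h *\<^sub>R a t) \<bullet> v t)) (at t)"
    by (rule has_derivative_inner[OF vd' vd'])
  moreover have "(\<lambda>h. v t \<bullet> (h *\<^sub>R a t) + (h *\<^sub>R a t) \<bullet> v t) = (*) (2 * (v t \<bullet> a t))"
    by (auto simp: fun_eq_iff inner_commute algebra_simps)
  ultimately show ?thesis unfolding has_field_derivative_def by simp
qed

lemma varphi_eq: "t > 0 \<Longrightarrow> varphi x \<alpha> lam t = v t \<bullet> a t + lam * (\<alpha> / t) * (v t \<bullet> v t)"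
proof -
  assume t: "t > 0"
  have vdx: "vector_derivative x (at s) = v s" if "s > 0" for s
    using xd[OF that] by (rule vector_derivative_at)
  have "((\<lambda>s. (norm (vector_derivative x (at s)))\<^sup>2) has_real_derivative (2 * (v t \<bullet> a t))) (at t)"
  proof (rule has_field_derivative_transform_within_open[OF vv_deriv[OF t], of "{0<..}"])
    fix s :: real assume "s \<in> {0<..}"
    then show "v s \<bullet> v s = (norm (vector_derivative x (at s)))\<^sup>2"
      using vdx by (simp add: power2_norm_eq_inner)
  qed (use t in auto)
  then have "deriv (\<lambda>s. (norm (vector_derivative x (at s)))\<^sup>2) t = 2 * (v t \<bullet> a t)"
    by (rule DERIV_imp_deriv)
  then show ?thesis unfolding varphi_def using vdx[OF t] by (simp add: power2_norm_eq_inner)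
qed


lemma arith1:
  fixes b m s q G :: real
  assumes "b > 0" "m > 0" "s > 0" "q > 0"
  shows "b * m * (s * (s * G / (2 * q))\<^sup>2) * (2 * q\<^sup>2 / (b * m\<^sup>2 * s ^ 3)) = G\<^sup>2 / (2 * m)"
  using assms by (simp add: field_simps power2_eq_square power3_eq_cube)

abbreviation BB where "BB \<equiv> Bc \<mu> L \<alpha> \<beta>"
abbreviation LL where "LL \<equiv> Lc \<mu> L \<alpha> \<beta>"

lemma cont_from_deriv:
  fixes f :: "real \<Rightarrow> real"
  assumes "\<And>t. t \<in> S \<Longrightarrow> (f has_real_derivative f' t) (at t)"
  shows "continuous_on S f"
  using assms by (intro continuous_at_imp_continuous_on) (blast intro: DERIV_isCont)

lemma exists_neg: "\<exists>t. 0 < t \<and> t \<le> BB \<and> varphi x \<alpha> lam t \<le> 0"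
proof (rule ccontr)
  assume "\<not> ?thesis"
  then have pos: "\<And>t. 0 < t \<Longrightarrow> t \<le> BB \<Longrightarrow> varphi x \<alpha> lam t > 0" by (meson not_le)
  define p where "p = 2 * lam * \<alpha>"
  have p0: "0 \<le> p" using lam alpha_pos by (simp add: p_def)
  have p1: "p \<le> 1"
  proof -
    have "lam * (2 * \<alpha>) \<le> 1 / (2 * \<alpha>) * (2 * \<alpha>)" using lam alpha_pos by (intro mult_right_mono) auto
    then show ?thesis using alpha_pos by (simp add: p_def algebra_simps)
  qed
  define P where "P t = t powr p * (v t \<bullet> v t)" for t
  have Pd: "(P has_real_derivative (2 * t powr p * varphi x \<alpha> lam t)) (at t)" if t: "t > 0" for t
  proof -
    have "(P has_real_derivative (p * t powr (p - 1) * (v t \<bullet> v t) + 2 * (v t \<bullet> a t) * t powr p)) (at t)"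
      unfolding P_def by (rule DERIV_mult[OF has_real_derivative_powr[OF t] vv_deriv[OF t]])
    moreover have "p * t powr (p - 1) * (v t \<bullet> v t) + 2 * (v t \<bullet> a t) * t powr p = 2 * t powr p * varphi x \<alpha> lam t"
    proof -
      have "t powr (p - 1) = t powr p / t" using t by (simp add: powr_diff powr_one)
      then show ?thesis unfolding varphi_eq[OF t] p_def using t by (simp add: field_simps)
    qed
    ultimately show ?thesis by simp
  qed
  have s0B: "s0 \<le> BB"
  proof -
    have "1 \<le> exp (LL + 1)"
    proof -
      have "LL \<ge> 0" unfolding Lc_def using beta_pos mu_pos s0_pos by simp
      then show ?thesis by simp
    qed
    then show ?thesis unfolding Bc_def using s0_pos mult_left_mono[of 1 "exp (LL + 1)" s0] by simp
  qed
  have Pinc: "P s0 \<le> P t" if t: "s0 \<le> t" "t \<le> BB" for t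
  proof (rule DERIV_nonneg_imp_increasing_open[OF t(1)])
    fix u assume u: "s0 < u" "u < t"
    then have "u > 0" "u \<le> BB" using s0_pos t by auto
    then show "\<exists>y. (P has_real_derivative y) (at u) \<and> 0 \<le> y"
      using Pd[of u] pos[of u] by (intro exI[of _ "2 * u powr p * varphi x \<alpha> lam u"]) auto
  next
    show "continuous_on {s0..t} P"
      by (rule cont_from_deriv[OF Pd]) (use s0_pos in auto)
  qed
  define K where "K = s0 * (v s0 \<bullet> v s0)"
  have vv_low: "v t \<bullet> v t \<ge> K / t" if t: "s0 \<le> t" "t \<le> BB" for t
  proof -
    have tp: "t > 0" using t s0_pos by simp
    have "s0 powr p * (v s0 \<bullet> v s0) \<le> t powr p * (v t \<bullet> v t)" using Pinc[OF t] by (simp add: P_def)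
    then have 1: "(s0 / t) powr p * (v s0 \<bullet> v s0) \<le> v t \<bullet> v t"
      using tp by (simp add: powr_divide field_simps)
    have "(s0 / t) powr 1 \<le> (s0 / t) powr p"
      by (rule powr_mono') (use p1 s0_pos t tp in auto)
    then have "s0 / t \<le> (s0 / t) powr p" using s0_pos tp by (simp add: powr_one)
    then have "(s0 / t) * (v s0 \<bullet> v s0) \<le> (s0 / t) powr p * (v s0 \<bullet> v s0)"
      by (intro mult_right_mono) auto
    with 1 show ?thesis by (simp add: K_def)
  qed
  define F where "F t = E t + \<beta> * \<mu> * K * ln t" for t
  have "F BB \<le> F s0"
  proof (rule decr_lemma[OF s0B, of F "\<lambda>t. g (x t) \<bullet> v t + v t \<bullet> a t + \<beta> * \<mu> * K / t"])
    show "continuous_on {s0..BB} F" unfolding F_def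
      by (intro continuous_intros continuous_on_subset[OF Ec]) (use s0_pos in auto)
    fix u assume u: "s0 < u" "u < BB"
    then have up: "u > 0" using s0_pos by simp
    show "(F has_real_derivative (g (x u) \<bullet> v u + v u \<bullet> a u + \<beta> * \<mu> * K / u)) (at u)"
      unfolding F_def using Ed[OF up] up by (auto intro!: derivative_eq_intros)
    have "\<beta> * \<mu> * (K / u) \<le> \<beta> * \<mu> * (v u \<bullet> v u)"
      using vv_low[of u] u beta_pos mu_pos by (intro mult_left_mono) auto
    then show "g (x u) \<bullet> v u + v u \<bullet> a u + \<beta> * \<mu> * K / u \<le> 0"
      using Ed_le[OF up] by simp
  qed
  then have 1: "\<beta> * \<mu> * K * (ln BB - ln s0) \<le> E s0 - E BB"
    by (simp add: F_def algebra_simps)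
  have "ln BB = ln s0 + (LL + 1)" unfolding Bc_def using s0_pos by (simp add: ln_mult)
  then have 2: "ln BB - ln s0 = LL + 1" by simp
  have 3: "E s0 \<le> \<phi> z" using E_decr[of 0 s0] s0_pos by (simp add: E_def x0 v0)
  have 4: "E BB \<ge> \<phi> z - G\<^sup>2 / (2 * \<mu>)"
  proof -
    have "v BB \<bullet> v BB \<ge> 0" by simp
    then show ?thesis using phi_lower[of "x BB"] unfolding E_def by linarith
  qed
  have 5: "\<beta> * \<mu> * K * (LL + 1) \<le> G\<^sup>2 / (2 * \<mu>)" using 1 2 3 4 by simp
  define c where "c = s0 * G / (2 * (\<alpha> + 1))"
  have c0: "c > 0" using s0_pos G_pos alpha_pos by (simp add: c_def)
  have Kc: "K \<ge> s0 * c\<^sup>2"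
  proof -
    have "c\<^sup>2 \<le> (norm (v s0))\<^sup>2" using v_s0 c0 unfolding c_def by (intro power_mono) auto
    then show ?thesis unfolding K_def power2_norm_eq_inner using s0_pos by (intro mult_left_mono) auto
  qed
  have Kpos: "K > 0" using Kc c0 s0_pos by (smt (verit) mult_pos_pos zero_less_power)
  have LL0: "LL \<ge> 0" unfolding Lc_def using beta_pos mu_pos s0_pos by simp
  have "\<beta> * \<mu> * (s0 * c\<^sup>2) * LL = G\<^sup>2 / (2 * \<mu>)"
    unfolding Lc_def c_def using arith1[of \<beta> \<mu> s0 "\<alpha> + 1" G] s0_pos beta_pos mu_pos alpha_pos
    by (simp add: add.commute)
  moreover have "\<beta> * \<mu> * (s0 * c\<^sup>2) * LL \<le> \<beta> * \<mu> * K * LL"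
    using Kc LL0 beta_pos mu_pos by (intro mult_right_mono mult_left_mono) auto
  moreover have "\<beta> * \<mu> * K > 0" using Kpos beta_pos mu_pos by simp
  ultimately have "\<beta> * \<mu> * K * (LL + 1) > G\<^sup>2 / (2 * \<mu>)" by (simp add: algebra_simps)
  with 5 show False by simp
qed

end

theorem mainTheorem8:
  fixes \<phi> :: "'a::euclidean_space \<Rightarrow> real"
    and g :: "'a \<Rightarrow> 'a"
    and H :: "'a \<Rightarrow> 'a \<Rightarrow>\<^sub>L 'a"
    and X :: "'a \<Rightarrow> real \<Rightarrow> 'a"
    and \<mu> L \<alpha> \<beta> lam :: real
  assumes grad: "\<And>x. (\<phi> has_derivative (\<lambda>h. g x \<bullet> h)) (at x)"
    and hess: "\<And>x. (g has_derivative blinfun_apply (H x)) (at x)"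
    and hess_cont: "continuous_on UNIV H"
    and mu_pos: "\<mu> > 0"
    and sconv: "strongly_convex_on \<mu> UNIV \<phi>"
    and lip: "L-lipschitz_on UNIV g"
    and sol: "\<And>z. is_solution g H \<alpha> \<beta> z (X z)"
    and alpha_pos: "\<alpha> > 0" and beta_pos: "\<beta> > 0"
    and lam: "0 \<le> lam" "lam \<le> 1" "lam \<le> 1 / (2 * \<alpha>)"
  shows "(SUP z \<in> - argmin_set \<phi>. T_lambda (X z) \<alpha> lam) < \<infinity>"
proof -
  define BB where "BB = Bc \<mu> L \<alpha> \<beta>"
  have bound: "T_lambda (X z) \<alpha> lam \<le> ereal BB" if z: "z \<in> - argmin_set \<phi>" for z
  proof -
    obtain v a where va: "\<forall>t\<ge>0. (X z has_vector_derivative v t) (at t within {0..})"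
          "continuous_on {0..} v"
          "\<forall>t>0. (v has_vector_derivative a t) (at t)"
          "\<forall>t>0. a t + (\<alpha> / t) *\<^sub>R v t + \<beta> *\<^sub>R blinfun_apply (H (X z t)) (v t) + g (X z t) = 0"
          "X z 0 = z" "v 0 = 0"
      using sol[of z] unfolding is_solution_def by blast
    have gz: "g z \<noteq> 0" using grad_nonzero[OF grad sconv mu_pos] z by simp
    interpret S: sol_setting \<phi> g H \<mu> L \<alpha> \<beta> lam "X z" v a z
      by unfold_locales (use grad hess mu_pos sconv lip alpha_pos beta_pos lam va gz in auto)
    obtain t where t: "0 < t" "t \<le> BB" "varphi (X z) \<alpha> lam t \<le> 0"
      using S.exists_neg unfolding BB_def by blast
    have "T_lambda (X z) \<alpha> lam \<le> ereal t" unfolding T_lambda_def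
      by (rule Inf_lower) (use t in auto)
    also have "ereal t \<le> ereal BB" using t by simp
    finally show ?thesis .
  qed
  then have "(SUP z \<in> - argmin_set \<phi>. T_lambda (X z) \<alpha> lam) \<le> ereal BB" by (rule SUP_least)
  then show ?thesis using le_less_trans by fastforce
qed

end
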